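(* Let $\theta>-1$, $\beta>0$, and let $\mathscr{L}_i^{(\theta,\beta)}$, $i=0,1,2,\dots$, denote the generalized Laguerre polynomials $$\mathscr{L}_i^{(\theta,\beta)}(x)=\frac{1}{i!}x^{-\theta}e^{\beta x}\frac{d^i}{dx^i}\big(x^{i+\theta}e^{-\beta x}\big).$$ Let $n$ be a positive integer and let $\varrho:(0,\infty)\to\mathbb{R}$ be a function with $n-1<\varrho_{\min}<\varrho(x)<\varrho_{\max}<n$ for all $x>0$, for some constants $\varrho_{\min},\varrho_{\max}$. For $x>0$ and $i\ge 0$ define $$\hat{\mathscr{L}}_i^{(\varrho(x),\theta,\beta)}(x)=\frac{1}{\Gamma(\varrho(x))}\int_0^x (x-t)^{\varrho(x)-1}\mathscr{L}_i^{(\theta,\beta)}(t)\,dt .$$ Then for all $x>0$: $$\hat{\mathscr{L}}_0^{(\varrho(x),\theta,\beta)}(x)=\frac{x^{\varrho(x)}}{\Gamma(\varrho(x)+1)},\qquad \hat{\mathscr{L}}_1^{(\varrho(x),\theta,\beta)}(x)=\frac{(\theta+1)\,x^{\varrho(x)}}{\Gamma(\varrho(x)+1)}-\frac{\beta x^{\varrho(x)+1}}{\Gamma(\varrho(x)+2)},$$ and for every $i\ge 1$, $$\hat{\mathscr{L}}_{i+1}^{(\varrho(x),\theta,\beta)}(x)=\frac{1}{i+\varrho(x)+1}\Big\{(2i+\theta+\varrho(x)+1-\beta x)\,\hat{\mathscr{L}}_i^{(\varrho(x),\theta,\beta)}(x)-(i+\theta)\,\hat{\mathscr{L}}_{i-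1}^{(\varrho(x),\theta,\beta)}(x)-\frac{x^{\varrho(x)}}{\Gamma(\varrho(x))}\big(\mathscr{L}_i^{(\theta,\beta)}(0)-\mathscr{L}_{i+1}^{(\theta,\beta)}(0)\big)\Big\}.$$
   Context: $\hat{\mathscr{L}}_i^{(\varrho(x),\theta,\beta)}(x)$ is the variable-order (type I, Riemann–Liouville-type) fractional integral of order $\varrho(x)$ of $\mathscr{L}_i^{(\theta,\beta)}$, where the order $\varrho(x)$ is frozen at the outer variable $x$. The generalized Laguerre polynomials satisfy $\mathscr{L}_0^{(\theta,\beta)}=1$, $\mathscr{L}_1^{(\theta,\beta)}(x)=\theta+1-\beta x$, and are orthogonal on $(0,\infty)$ with respect to the weight $x^\theta e^{-\beta x}$. *)

theory Defs
  imports "HOL-Analysis.Analysis" "HOL-Computational_Algebra.Polynomial"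
begin

definition laguerre_rodrigues :: "real \<Rightarrow> real \<Rightarrow> nat \<Rightarrow> real \<Rightarrow> real" where
  "laguerre_rodrigues \<theta> \<beta> i x =
     (1 / fact i) * x powr (-\<theta>) * exp (\<beta> * x) *
     (deriv ^^ i) (\<lambda>t. t powr (real i + \<theta>) * exp (- \<beta> * t)) x"

text \<open>The generalized Laguerre polynomial: the polynomial agreeing with the
  Rodrigues expression on (0,\<infinity>), evaluated at x (so also at x = 0).\<close>
definition laguerre :: "real \<Rightarrow> real \<Rightarrow> nat \<Rightarrow> real \<Rightarrow> real" where
  "laguerre \<theta> \<beta> i x =
     poly (THE p :: real poly. \<forall>t>0. poly p t = laguerre_rodrigues \<theta> \<beta> i t) x"

definition laguerre_frac :: "(real \<Rightarrow> real) \<Rightarrow> real \<Rightarrow> real \<Rightarrow> nat \<Rightarrow> real \<Rightarrow> real" where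
  "laguerre_frac \<rho> \<theta> \<beta> i x =
     (1 / Gamma (\<rho> x)) * integral {0..x} (\<lambda>t. (x - t) powr (\<rho> x - 1) * laguerre \<theta> \<beta> i t)"

end

theory Submission
  imports Defs
begin

lemma mono_int:
  fixes x r :: real and k :: nat
  assumes x: "x > 0" and r: "r > 0"
  shows "((\<lambda>t. (x - t) powr (r - 1) * t ^ k) has_integral
           (x powr (real k + r) * fact k * Gamma r / Gamma (real k + r + 1))) {0..x}"
proof -
  define f where "f = (\<lambda>u::real. u powr (real k + 1 - 1) * (1 - u) powr (r - 1))"
  have B: "(f has_integral Beta (real k + 1) r) {0..1}"
    unfolding f_def by (rule has_integral_Beta_real) (use r in auto)
  have "((\<lambda>t. f ((1/x) * t)) has_integral (1 / \<bar>1/x\<bar>) *\<^sub>R Beta (real k + 1) r) ((\<lambda>u. u / (1/x)) ` {0..1})"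
    by (rule has_integral_stretch_real[OF B]) (use x in auto)
  moreover have "(\<lambda>u. u / (1/x)) ` {0..1} = {0..x}"
  proof -
    have "(\<lambda>u. u / (1/x)) ` {0..1} = (\<lambda>u. x * u) ` {0..1}" by (auto simp: mult.commute)
    also have "\<dots> = {0..x}" using x by (auto simp: image_iff intro!: bexI[where x="_ / x"] simp: field_simps)
    finally show ?thesis .
  qed
  ultimately have I: "((\<lambda>t. f (t/x)) has_integral x * Beta (real k + 1) r) {0..x}"
    using x by simp
  have I2: "((\<lambda>t. x powr (real k + r - 1) * f (t/x)) has_integral x powr (real k + r - 1) * (x * Beta (real k + 1) r)) {0..x}"
    by (rule has_integral_mult_right[OF I])
  have eq: "x powr (real k + r - 1) * f (t/x) = (x - t) powr (r - 1) * t ^ k" if "t \<in> {0..x} - {0, x}" for t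
  proof -
    from that have t: "0 < t" "t < x" by auto
    have "f (t/x) = (t/x) powr real k * ((x - t)/x) powr (r - 1)"
      unfolding f_def using x by (simp add: field_simps)
    also have "\<dots> = t ^ k / x powr real k * ((x - t) powr (r - 1) / x powr (r - 1))"
      using t x by (simp add: powr_divide powr_realpow)
    finally have "f (t/x) = t ^ k / x powr real k * ((x - t) powr (r - 1) / x powr (r - 1))" .
    moreover have "x powr (real k + r - 1) = x powr real k * x powr (r - 1)"
      using x by (simp add: powr_add[symmetric] add_diff_eq)
    ultimately show ?thesis using x by (simp add: field_simps)
  qed
  have I3: "((\<lambda>t. (x - t) powr (r - 1) * t ^ k) has_integral x powr (real k + r - 1) * (x * Beta (real k + 1) r)) {0..x}"
    by (rule has_integral_spike_finite[of "{0, x}", OF _ eq[symmetric] I2]) auto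
  have e1: "x powr (real k + r - 1) * (x * Beta (real k + 1) r) = x powr (real k + r) * Beta (real k + 1) r"
  proof -
    have "x powr (real k + r - 1) * x = x powr (real k + r)"
      using x by (simp add: powr_diff)
    thus ?thesis by (simp add: mult.assoc[symmetric])
  qed
  have e2: "Beta (real k + 1) r = fact k * Gamma r / Gamma (real k + r + 1)"
    unfolding Beta_def by (simp add: Gamma_fact add_ac)
  have e: "x powr (real k + r - 1) * (x * Beta (real k + 1) r) = x powr (real k + r) * fact k * Gamma r / Gamma (real k + r + 1)"
    by (subst e1, subst e2) simp
  show ?thesis using I3 unfolding e .
qed

fun Pr :: "real \<Rightarrow> real \<Rightarrow> nat \<Rightarrow> real poly" where
  "Pr b a 0 = 1"
| "Pr b a (Suc m) = pCons 0 (pderiv (Pr b a m)) + smult (a - real m) (Pr b a m) - smult b (pCons 0 (Pr b a m))"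

lemma Pr_deriv:
  "t > 0 \<Longrightarrow> (deriv ^^ m) (\<lambda>t. t powr a * exp (- b * t)) t = poly (Pr b a m) t * t powr (a - real m) * exp (- b * t)"
proof (induction m arbitrary: t)
  case 0
  then show ?case by simp
next
  case (Suc m)
  define P where "P = Pr b a m"
  define g where "g = (\<lambda>s. poly P s * s powr (a - real m) * exp (- b * s))"
  have t: "t > 0" by fact
  define D where "D = poly (pderiv P) t * t powr (a - real m) * exp (- b * t)
     + poly P t * ((a - real m) * t powr (a - real m - 1)) * exp (- b * t)
     + poly P t * t powr (a - real m) * (exp (- b * t) * (- b))"
  have "(g has_real_derivative D) (at t)"
    unfolding g_def D_def using t
    by (auto intro!: derivative_eq_intros simp: algebra_simps)
  hence "((deriv ^^ m) (\<lambda>t. t powr a * exp (- b * t)) has_real_derivative D) (at t)"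
    by (rule has_field_derivative_transform_within_open[of _ _ _ "{0<..}"])
       (use t Suc.IH in \<open>auto simp: g_def P_def\<close>)
  hence "(deriv ^^ Suc m) (\<lambda>t. t powr a * exp (- b * t)) t = D"
    by (simp add: DERIV_imp_deriv)
  also have "D = poly (Pr b a (Suc m)) t * t powr (a - real (Suc m)) * exp (- b * t)"
  proof -
    define q where "q = t powr (a - real (Suc m))"
    have "t powr (a - real m) = t powr (1 + (a - real (Suc m)))" by simp
    also have "\<dots> = t * q" unfolding q_def by (subst powr_add) (use t in simp)
    finally have q1: "t powr (a - real m) = t * q" .
    have q2: "t powr (a - real m - 1) = q" unfolding q_def by (simp add: algebra_simps)
    show ?thesis unfolding D_def q1 q2 q_def[symmetric] P_def
      by (simp add: algebra_simps)
  qed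
  finally show ?case .
qed

lemma gb_step: "(a - real j) * (a gchoose j) = real (Suc j) * (a gchoose Suc j)"
  using gbinomial_absorb_comp[of a j] gbinomial_absorption[of j a] by simp

lemma Pr_coeff:
  "coeff (Pr b a m) k = (if k \<le> m then fact m / fact k * (a gchoose (m - k)) * (- b) ^ k else 0)"
proof (induction m arbitrary: k)
  case 0
  then show ?case by (cases k) auto
next
  case (Suc m)
  show ?case
  proof (cases k)
    case 0
    have "coeff (Pr b a (Suc m)) k = (a - real m) * fact m * (a gchoose m)"
      using Suc.IH[of 0] 0 by simp
    also have "\<dots> = fact (Suc m) * (a gchoose Suc m)"
      using arg_cong[OF gb_step[of a m], of "\<lambda>z. fact m * z"] by (simp add: algebra_simps)
    finally show ?thesis using 0 by simp
  next
    case (Suc j)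
    have c: "coeff (Pr b a (Suc m)) k = (real (Suc j) + a - real m) * coeff (Pr b a m) (Suc j) - b * coeff (Pr b a m) j"
      using Suc by (simp add: coeff_pderiv algebra_simps)
    show ?thesis
    proof (cases "Suc j \<le> m")
      case True
      define i where "i = m - Suc j"
      have m: "m = i + Suc j" using True i_def by simp
      have e1: "m - Suc j = i" "m - j = Suc i" "Suc m - Suc j = Suc i" using m by auto
      define G where "G = a gchoose Suc i"
      define X where "X = fact m / fact (Suc j) * (- b) ^ Suc j"
      have h1: "coeff (Pr b a m) (Suc j) = fact m / fact (Suc j) * (a gchoose i) * (- b) ^ Suc j"
        unfolding Suc.IH using True e1 by simp
      have h2: "coeff (Pr b a m) j = fact m / fact j * G * (- b) ^ j"
        unfolding Suc.IH G_def using True e1 by simp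
      have h3: "(real (Suc j) + a - real m) * coeff (Pr b a m) (Suc j) = real (Suc i) * G * X"
      proof -
        have "(real (Suc j) + a - real m) = a - real i" using m by simp
        hence "(real (Suc j) + a - real m) * coeff (Pr b a m) (Suc j) = ((a - real i) * (a gchoose i)) * X"
          unfolding h1 X_def by (simp only: mult_ac)
        also have "\<dots> = real (Suc i) * G * X" unfolding gb_step G_def by simp
        finally show ?thesis .
      qed
      have h4: "b * coeff (Pr b a m) j = - real (Suc j) * G * X"
      proof -
        have f: "fact (Suc j) = real (Suc j) * (fact j :: real)" by simp
        have "real (Suc j) \<noteq> 0" "(fact j :: real) \<noteq> 0" by auto
        then show ?thesis unfolding h2 X_def f by (simp add: field_simps del: of_nat_Suc)
      qed
      have "coeff (Pr b a (Suc m)) k = real (Suc m) * G * X"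
        unfolding c h3 h4 using m by (simp add: algebra_simps)
      also have "\<dots> = fact (Suc m) / fact k * (a gchoose (Suc m - k)) * (- b) ^ k"
        using Suc e1 by (simp add: X_def G_def del: of_nat_Suc) 
      finally show ?thesis using Suc True by simp
    next
      case False
      show ?thesis
      proof (cases "j = m")
        case True
        then show ?thesis unfolding c Suc.IH using Suc by simp
      next
        case False
        then show ?thesis unfolding c Suc.IH using Suc \<open>\<not> Suc j \<le> m\<close> by simp
      qed
    qed
  qed
qed

definition E :: "real \<Rightarrow> real \<Rightarrow> nat \<Rightarrow> nat \<Rightarrow> real" where
  "E \<theta> \<beta> i k = (if k \<le> i then ((real i + \<theta>) gchoose (i - k)) * (- \<beta>) ^ k else 0)"

lemma gb_abs: "real (Suc m) * (a gchoose Suc m) = a * ((a - 1) gchoose m)"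
  using gbinomial_absorption[of m a] by simp

lemma R1: "E \<theta> \<beta> (Suc i) (Suc k) = E \<theta> \<beta> i (Suc k) - \<beta> * E \<theta> \<beta> i k"
proof (cases "Suc k \<le> i")
  case True
  define m where "m = i - Suc k"
  have e: "Suc i - Suc k = Suc m" "i - Suc k = m" "i - k = Suc m" using True m_def by auto
  have g: "(real (Suc i) + \<theta>) gchoose Suc m = ((real i + \<theta>) gchoose m) + ((real i + \<theta>) gchoose Suc m)"
    using gbinomial_Suc_Suc[of "real i + \<theta>" m] by (simp add: add_ac)
  have "E \<theta> \<beta> (Suc i) (Suc k) = (((real i + \<theta>) gchoose m) + ((real i + \<theta>) gchoose Suc m)) * (- \<beta>) ^ Suc k"
    unfolding E_def using True by (simp only: e g if_True, (simp)?)
  moreover have "E \<theta> \<beta> i (Suc k) = ((real i + \<theta>) gchoose m) * (- \<beta>) ^ Suc k"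
    unfolding E_def using True by (simp only: e if_True, (simp)?)
  moreover have "E \<theta> \<beta> i k = ((real i + \<theta>) gchoose Suc m) * (- \<beta>) ^ k"
    unfolding E_def using True by (simp only: e, (simp)?)
  ultimately show ?thesis by (simp add: algebra_simps)
next
  case False
  then show ?thesis unfolding E_def
    by (cases "k = i") auto
qed

lemma R2a:
  "(real (Suc j) + 1) * E \<theta> \<beta> (Suc (Suc j)) 0
     = (2 * real (Suc j) + \<theta> + 1) * E \<theta> \<beta> (Suc j) 0 - (real (Suc j) + \<theta>) * E \<theta> \<beta> j 0"
proof -
  define a where "a = real (Suc j) + \<theta>"
  have a1: "real (Suc (Suc j)) + \<theta> = a + 1" "real j + \<theta> = a - 1" unfolding a_def by simp_all
  have s1: "((a + 1) gchoose Suc (Suc j)) = (a gchoose Suc j) + (a gchoose Suc (Suc j))"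
    by (rule gbinomial_Suc_Suc)
  have s2: "real (Suc (Suc j)) * (a gchoose Suc (Suc j)) = (a - real (Suc j)) * (a gchoose Suc j)"
    using gb_step[of a "Suc j"] by simp
  have s3: "real (Suc j) * (a gchoose Suc j) = a * ((a - 1) gchoose j)"
    by (rule gb_abs)
  have "(real (Suc j) + 1) * ((a + 1) gchoose Suc (Suc j))
     = (2 * real (Suc j) + \<theta> + 1) * (a gchoose Suc j) - (real (Suc j) + \<theta>) * ((a - 1) gchoose j)"
    unfolding s1 using s2 s3 unfolding a_def by (simp add: algebra_simps)
  then show ?thesis unfolding E_def a1 a_def[symmetric] by simp
qed

lemma R2b:
  "(real (Suc j) + 1) * E \<theta> \<beta> (Suc (Suc j)) (Suc k)
     = (2 * real (Suc j) + \<theta> + 1) * E \<theta> \<beta> (Suc j) (Suc k)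
       - \<beta> * real (Suc k) * E \<theta> \<beta> (Suc j) k - (real (Suc j) + \<theta>) * E \<theta> \<beta> j (Suc k)"
proof -
  define a where "a = real (Suc j) + \<theta>"
  define p where "p = (- \<beta>) ^ Suc k"
  have a1: "real (Suc (Suc j)) + \<theta> = a + 1" "real j + \<theta> = a - 1" unfolding a_def by simp_all
  have bp: "\<beta> * (- \<beta>) ^ k = - p" unfolding p_def by simp
  consider "k < j" | "k = j" | "k = Suc j" | "k > Suc j" by linarith
  then show ?thesis
  proof cases
    case 1
    define m' where "m' = j - Suc k"
    define m where "m = Suc m'"
    have e: "Suc (Suc j) - Suc k = Suc m" "Suc j - Suc k = m" "Suc j - k = Suc m" "j - Suc k = m'"
      using 1 unfolding m_def m'_def by auto
    have ij: "real (Suc j) = real m + real (Suc k)" using 1 unfolding m_def m'_def by simp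
    define A where "A = a gchoose m"
    define B where "B = a gchoose Suc m"
    define C where "C = (a - 1) gchoose m'"
    have s1: "((a + 1) gchoose Suc m) = A + B" unfolding A_def B_def by (rule gbinomial_Suc_Suc)
    have s2: "real (Suc m) * B = (a - real m) * A" unfolding A_def B_def using gb_step[of a m] by simp
    have s3: "real m * A = a * C" unfolding A_def C_def m_def by (rule gb_abs)
    have sc: "(real (Suc j) + 1) * (A + B) = (2 * real (Suc j) + \<theta> + 1) * A + real (Suc k) * B - a * C"
    proof -
      have "(real (Suc j) + 1) * (A + B) - ((2 * real (Suc j) + \<theta> + 1) * A + real (Suc k) * B - a * C)
          = real (Suc m) * B - (a - real m) * A + (a * C - real m * A)"
        unfolding ij a_def by (simp add: algebra_simps)
      also have "\<dots> = 0" using s2 s3 by simp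
      finally show ?thesis by simp
    qed
    have E1: "E \<theta> \<beta> (Suc (Suc j)) (Suc k) = (A + B) * p"
      unfolding E_def p_def using 1 by (simp only: e a1 s1, simp)
    have E2: "E \<theta> \<beta> (Suc j) (Suc k) = A * p"
      unfolding E_def p_def A_def a_def using 1 by (simp only: e, simp)
    have E3: "E \<theta> \<beta> (Suc j) k = B * (- \<beta>) ^ k"
      unfolding E_def B_def a_def using 1 by (simp only: e, simp)
    have E4: "E \<theta> \<beta> j (Suc k) = C * p"
      unfolding E_def p_def C_def using 1 by (simp only: e a1, simp)
    show ?thesis unfolding E1 E2 E3 E4
    proof -
      have "\<beta> * real (Suc k) * (B * (- \<beta>) ^ k) = real (Suc k) * B * (\<beta> * (- \<beta>) ^ k)"
        by (simp only: mult_ac)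
      hence "\<beta> * real (Suc k) * (B * (- \<beta>) ^ k) = - (real (Suc k) * B * p)"
        unfolding bp by simp
      then show "(real (Suc j) + 1) * ((A + B) * p) =
        (2 * real (Suc j) + \<theta> + 1) * (A * p) - \<beta> * real (Suc k) * (B * (- \<beta>) ^ k) - (real (Suc j) + \<theta>) * (C * p)"
        using arg_cong[OF sc, of "\<lambda>z. z * p"] unfolding a_def by (simp add: algebra_simps)
    qed
  next
    case 2
    have E1: "E \<theta> \<beta> (Suc (Suc j)) (Suc k) = (a + 1) * p"
      unfolding E_def p_def using 2 a1 by simp
    have E2: "E \<theta> \<beta> (Suc j) (Suc k) = p"
      unfolding E_def p_def using 2 by simp
    have E3: "E \<theta> \<beta> (Suc j) k = a * (- \<beta>) ^ k"
      unfolding E_def a_def using 2 by simp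
    have E4: "E \<theta> \<beta> j (Suc k) = 0"
      unfolding E_def using 2 by simp
    show ?thesis unfolding E1 E2 E3 E4
    proof -
      have "\<beta> * real (Suc k) * (a * (- \<beta>) ^ k) = real (Suc k) * a * (\<beta> * (- \<beta>) ^ k)"
        by (simp only: mult_ac)
      hence "\<beta> * real (Suc k) * (a * (- \<beta>) ^ k) = - (real (Suc k) * a * p)"
        unfolding bp by simp
      then show "(real (Suc j) + 1) * ((a + 1) * p) =
        (2 * real (Suc j) + \<theta> + 1) * p - \<beta> * real (Suc k) * (a * (- \<beta>) ^ k) - (real (Suc j) + \<theta>) * 0"
        using 2 unfolding a_def by (simp add: algebra_simps)
    qed
  next
    case 3
    have E1: "E \<theta> \<beta> (Suc (Suc j)) (Suc k) = p"
      unfolding E_def p_def using 3 by simp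
    have E2: "E \<theta> \<beta> (Suc j) (Suc k) = 0"
      unfolding E_def using 3 by simp
    have E3: "E \<theta> \<beta> (Suc j) k = (- \<beta>) ^ k"
      unfolding E_def using 3 by simp
    have E4: "E \<theta> \<beta> j (Suc k) = 0"
      unfolding E_def using 3 by simp
    show ?thesis unfolding E1 E2 E3 E4 p_def
      using 3 by (simp add: algebra_simps)
  next
    case 4
    then show ?thesis unfolding E_def by simp
  qed
qed

definition Lpoly :: "real \<Rightarrow> real \<Rightarrow> nat \<Rightarrow> real poly" where
  "Lpoly \<theta> \<beta> i = smult (1 / fact i) (Pr \<beta> (real i + \<theta>) i)"

lemma coeff_Lpoly: "coeff (Lpoly \<theta> \<beta> i) k = E \<theta> \<beta> i k / fact k"
  unfolding Lpoly_def E_def by (simp add: Pr_coeff)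

lemma Lpoly_rod: "t > 0 \<Longrightarrow> poly (Lpoly \<theta> \<beta> i) t = laguerre_rodrigues \<theta> \<beta> i t"
proof -
  assume t: "t > 0"
  have "laguerre_rodrigues \<theta> \<beta> i t = 1 / fact i * t powr (- \<theta>) * exp (\<beta> * t) *
      (poly (Pr \<beta> (real i + \<theta>) i) t * t powr (real i + \<theta> - real i) * exp (- \<beta> * t))"
    unfolding laguerre_rodrigues_def using Pr_deriv[OF t] by simp
  also have "\<dots> = 1 / fact i * poly (Pr \<beta> (real i + \<theta>) i) t * (t powr (- \<theta>) * t powr \<theta>) * (exp (\<beta> * t) * exp (- \<beta> * t))"
    by (simp add: algebra_simps)
  also have "t powr (- \<theta>) * t powr \<theta> = 1" using t by (simp add: powr_add[symmetric])
  also have "exp (\<beta> * t) * exp (- \<beta> * t) = 1" by (simp add: exp_add[symmetric])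
  finally show ?thesis unfolding Lpoly_def by simp
qed

lemma laguerre_Lpoly: "laguerre \<theta> \<beta> i x = poly (Lpoly \<theta> \<beta> i) x"
proof -
  have "(THE p :: real poly. \<forall>t>0. poly p t = laguerre_rodrigues \<theta> \<beta> i t) = Lpoly \<theta> \<beta> i"
  proof (rule the_equality)
    show "\<forall>t>0. poly (Lpoly \<theta> \<beta> i) t = laguerre_rodrigues \<theta> \<beta> i t" using Lpoly_rod by blast
  next
    fix q :: "real poly" assume q: "\<forall>t>0. poly q t = laguerre_rodrigues \<theta> \<beta> i t"
    show "q = Lpoly \<theta> \<beta> i"
    proof (rule ccontr)
      assume "q \<noteq> Lpoly \<theta> \<beta> i"
      hence "q - Lpoly \<theta> \<beta> i \<noteq> 0" by simp
      hence "finite {x. poly (q - Lpoly \<theta> \<beta> i) x = 0}" by (rule poly_roots_finite)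
      moreover have "{0<..} \<subseteq> {x. poly (q - Lpoly \<theta> \<beta> i) x = 0}"
        using q Lpoly_rod by auto
      ultimately have "finite {(0::real)<..}" by (rule finite_subset[rotated])
      thus False using infinite_Ioi by blast
    qed
  qed
  thus ?thesis unfolding laguerre_def by simp
qed

lemma poly_sumN:
  fixes p :: "real poly"
  shows "degree p \<le> N \<Longrightarrow> poly p x = (\<Sum>k\<le>N. coeff p k * x ^ k)"
  apply (subst poly_altdef)
  apply (rule sum.mono_neutral_left)
    apply (auto simp: coeff_eq_0)
  done

lemma laguerre_sum: "i \<le> N \<Longrightarrow> laguerre \<theta> \<beta> i x = (\<Sum>k\<le>N. E \<theta> \<beta> i k / fact k * x ^ k)"
proof -
  assume iN: "i \<le> N"
  have "degree (Lpoly \<theta> \<beta> i) \<le> i"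
    by (rule degree_le) (simp add: coeff_Lpoly E_def)
  hence "degree (Lpoly \<theta> \<beta> i) \<le> N" using iN by simp
  thus ?thesis unfolding laguerre_Lpoly by (simp add: poly_sumN coeff_Lpoly)
qed

lemma frac_sum:
  assumes x: "x > 0" and r: "\<rho> x > 0" and iN: "i \<le> N"
  shows "laguerre_frac \<rho> \<theta> \<beta> i x = (\<Sum>k\<le>N. E \<theta> \<beta> i k * x powr (real k + \<rho> x) / Gamma (real k + \<rho> x + 1))"
proof -
  define r where "r = \<rho> x"
  have r0: "r > 0" using r r_def by simp
  have I: "((\<lambda>t. \<Sum>k\<le>N. E \<theta> \<beta> i k / fact k * ((x - t) powr (r - 1) * t ^ k)) has_integral
      (\<Sum>k\<le>N. E \<theta> \<beta> i k / fact k * (x powr (real k + r) * fact k * Gamma r / Gamma (real k + r + 1)))) {0..x}"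
    by (intro has_integral_sum has_integral_mult_right mono_int x r0) auto
  have f: "(\<lambda>t. (x - t) powr (r - 1) * laguerre \<theta> \<beta> i t) = (\<lambda>t. \<Sum>k\<le>N. E \<theta> \<beta> i k / fact k * ((x - t) powr (r - 1) * t ^ k))"
    by (rule ext) (simp add: laguerre_sum[OF iN] sum_distrib_left mult_ac)
  have G: "Gamma r \<noteq> 0" using Gamma_real_pos[OF r0] by linarith
  have "laguerre_frac \<rho> \<theta> \<beta> i x = 1 / Gamma r * (\<Sum>k\<le>N. E \<theta> \<beta> i k / fact k * (x powr (real k + r) * fact k * Gamma r / Gamma (real k + r + 1)))"
    unfolding laguerre_frac_def r_def[symmetric] f using integral_unique[OF I] by simp
  also have "\<dots> = (\<Sum>k\<le>N. E \<theta> \<beta> i k * x powr (real k + r) / Gamma (real k + r + 1))"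
    unfolding sum_distrib_left using G by (intro sum.cong refl) (simp add: field_simps)
  finally show ?thesis unfolding r_def .
qed

lemma comb:
  fixes J2 J1 J0 a2 a1 a0 S2 S1 S0 x U c k1 k0 b D :: real
  assumes "J2 = a2 + S2" "J1 = a1 + S1" "J0 = a0 + S0" "x * J1 = U"
    "c * S2 = k1 * S1 - b * U - k0 * S0" "c * a2 = k1 * a1 - k0 * a0 - D"
  shows "c * J2 = (k1 - b * x) * J1 - k0 * J0 - D"
proof -
  have "(k1 - b * x) * J1 = k1 * J1 - b * (x * J1)" by (simp add: algebra_simps)
  also have "\<dots> = k1 * (a1 + S1) - b * U" using assms by simp
  finally have "(k1 - b * x) * J1 - k0 * J0 - D = (k1 * a1 - k0 * a0 - D) + (k1 * S1 - b * U - k0 * S0)"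
    using assms by (simp add: algebra_simps)
  also have "\<dots> = c * J2" using assms by (simp add: algebra_simps)
  finally show ?thesis by simp
qed

lemma main_rec:
  assumes x: "x > 0" and r0: "\<rho> x > 0"
  shows "(real (Suc j) + \<rho> x + 1) * laguerre_frac \<rho> \<theta> \<beta> (Suc (Suc j)) x
    = (2 * real (Suc j) + \<theta> + \<rho> x + 1 - \<beta> * x) * laguerre_frac \<rho> \<theta> \<beta> (Suc j) x
      - (real (Suc j) + \<theta>) * laguerre_frac \<rho> \<theta> \<beta> j x
      - x powr (\<rho> x) / Gamma (\<rho> x) * (E \<theta> \<beta> (Suc j) 0 - E \<theta> \<beta> (Suc (Suc j)) 0)"
proof -
  define r where "r = \<rho> x"
  have r: "r > 0" using r0 r_def by simp
  define W where "W = (\<lambda>k::nat. x powr (real (Suc k) + r) / Gamma (real (Suc k) + r + 1))"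
  define T0 where "T0 = x powr r"
  define G0 where "G0 = Gamma (r + 1)"
  define J where "J = (\<lambda>m. laguerre_frac \<rho> \<theta> \<beta> m x)"
  define S where "S = (\<lambda>m. \<Sum>k\<le>Suc (Suc j). E \<theta> \<beta> m (Suc k) * W k)"
  define U where "U = (\<Sum>k\<le>Suc (Suc j). (real k + r + 1) * E \<theta> \<beta> (Suc j) k * W k)"
  have Gpos: "\<And>k::nat. Gamma (real k + r + 1) > 0" using r by (intro Gamma_real_pos) simp
  have Jsplit: "J m = E \<theta> \<beta> m 0 * T0 / G0 + S m" if "m \<le> Suc (Suc (Suc j))" for m
    unfolding J_def S_def W_def T0_def G0_def
    by (subst frac_sum[of x \<rho>, OF x r0 that], subst sum.atMost_Suc_shift) (simp add: r_def add_ac del: sum.atMost_Suc)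
  have xJ: "x * J (Suc j) = U"
  proof -
    have "x * J (Suc j) = (\<Sum>k\<le>Suc (Suc j). x * (E \<theta> \<beta> (Suc j) k * x powr (real k + r) / Gamma (real k + r + 1)))"
      unfolding J_def by (subst frac_sum[of x \<rho> _ "Suc (Suc j)", OF x r0]) (simp_all add: r_def sum_distrib_left del: sum.atMost_Suc)
    also have "\<dots> = U" unfolding U_def
    proof (rule sum.cong[OF refl])
      fix k assume "k \<in> {..Suc (Suc j)}"
      have p: "x * x powr (real k + r) = x powr (real (Suc k) + r)"
        using x by (simp add: powr_add add_ac)
      have g: "Gamma (real (Suc k) + r + 1) = (real k + r + 1) * Gamma (real k + r + 1)"
      proof -
        have "real k + r + 1 \<notin> \<int>\<^sub>\<le>\<^sub>0" using r nonpos_Ints_nonpos[of "real k + r + 1"] by auto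
        thus ?thesis using Gamma_plus1[of "real k + r + 1"] by (simp add: add_ac)
      qed
      have c: "real k + r + 1 \<noteq> 0" using r by simp
      have "(real k + r + 1) * E \<theta> \<beta> (Suc j) k * W k
          = (real k + r + 1) * (E \<theta> \<beta> (Suc j) k * (x * x powr (real k + r))) / ((real k + r + 1) * Gamma (real k + r + 1))"
        unfolding W_def g p[symmetric] by simp
      also have "\<dots> = E \<theta> \<beta> (Suc j) k * (x * x powr (real k + r)) / Gamma (real k + r + 1)"
        using c by (rule mult_divide_mult_cancel_left)
      finally show "x * (E \<theta> \<beta> (Suc j) k * x powr (real k + r) / Gamma (real k + r + 1)) = (real k + r + 1) * E \<theta> \<beta> (Suc j) k * W k"
        by (simp add: mult_ac)
    qed
    finally show ?thesis .
  qed
  have Srec: "(real (Suc j) + r + 1) * S (Suc (Suc j)) = (2 * real (Suc j) + \<theta> + r + 1) * S (Suc j) - \<beta> * U - (real (Suc j) + \<theta>) * S j"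
  proof -
    have pt: "(real (Suc j) + r + 1) * (E \<theta> \<beta> (Suc (Suc j)) (Suc k) * W k) =
       (2 * real (Suc j) + \<theta> + r + 1) * (E \<theta> \<beta> (Suc j) (Suc k) * W k) - \<beta> * ((real k + r + 1) * E \<theta> \<beta> (Suc j) k * W k)
       - (real (Suc j) + \<theta>) * (E \<theta> \<beta> j (Suc k) * W k)" for k
    proof -
      have sc: "(real (Suc j) + r + 1) * E \<theta> \<beta> (Suc (Suc j)) (Suc k) =
         (2 * real (Suc j) + \<theta> + r + 1) * E \<theta> \<beta> (Suc j) (Suc k) - \<beta> * ((real k + r + 1) * E \<theta> \<beta> (Suc j) k)
         - (real (Suc j) + \<theta>) * E \<theta> \<beta> j (Suc k)"
      proof -
        have "(real (Suc j) + r + 1) * E \<theta> \<beta> (Suc (Suc j)) (Suc k) =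
           (real (Suc j) + 1) * E \<theta> \<beta> (Suc (Suc j)) (Suc k) + r * E \<theta> \<beta> (Suc (Suc j)) (Suc k)"
          by (simp add: algebra_simps)
        also have "\<dots> = ((2 * real (Suc j) + \<theta> + 1) * E \<theta> \<beta> (Suc j) (Suc k)
          - \<beta> * real (Suc k) * E \<theta> \<beta> (Suc j) k - (real (Suc j) + \<theta>) * E \<theta> \<beta> j (Suc k))
          + r * (E \<theta> \<beta> (Suc j) (Suc k) - \<beta> * E \<theta> \<beta> (Suc j) k)"
          by (subst R2b, subst R1[of \<theta> \<beta> "Suc j" k], rule refl)
        finally show ?thesis by (simp add: algebra_simps)
      qed
      show ?thesis using arg_cong[OF sc, of "\<lambda>z. z * W k"] by (simp add: algebra_simps)
    qed
    have "(real (Suc j) + r + 1) * S (Suc (Suc j)) = (\<Sum>k\<le>Suc (Suc j).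
       (2 * real (Suc j) + \<theta> + r + 1) * (E \<theta> \<beta> (Suc j) (Suc k) * W k) - \<beta> * ((real k + r + 1) * E \<theta> \<beta> (Suc j) k * W k)
       - (real (Suc j) + \<theta>) * (E \<theta> \<beta> j (Suc k) * W k))"
      unfolding S_def sum_distrib_left using pt by (intro sum.cong refl) 
    also have "\<dots> = (2 * real (Suc j) + \<theta> + r + 1) * S (Suc j) - \<beta> * U - (real (Suc j) + \<theta>) * S j"
      unfolding S_def U_def by (simp add: sum_subtractf sum_distrib_left del: sum.atMost_Suc)
    finally show ?thesis .
  qed
  have Crec: "(real (Suc j) + r + 1) * (E \<theta> \<beta> (Suc (Suc j)) 0 * T0 / G0) =
     (2 * real (Suc j) + \<theta> + r + 1) * (E \<theta> \<beta> (Suc j) 0 * T0 / G0) - (real (Suc j) + \<theta>) * (E \<theta> \<beta> j 0 * T0 / G0)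
     - T0 / Gamma r * (E \<theta> \<beta> (Suc j) 0 - E \<theta> \<beta> (Suc (Suc j)) 0)"
  proof -
    have "r \<notin> \<int>\<^sub>\<le>\<^sub>0" using r nonpos_Ints_nonpos[of r] by auto
    hence g: "G0 = r * Gamma r" unfolding G0_def by (rule Gamma_plus1)
    have gr: "Gamma r > 0" using r by simp
    have sc: "(real (Suc j) + r + 1) * E \<theta> \<beta> (Suc (Suc j)) 0 =
     (2 * real (Suc j) + \<theta> + r + 1) * E \<theta> \<beta> (Suc j) 0 - (real (Suc j) + \<theta>) * E \<theta> \<beta> j 0
     - r * (E \<theta> \<beta> (Suc j) 0 - E \<theta> \<beta> (Suc (Suc j)) 0)"
      using R2a[of j \<theta> \<beta>] by (simp add: algebra_simps)
    have h: "T0 / Gamma r = r * (T0 / G0)" unfolding g using r gr by (simp add: field_simps)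
    define Q where "Q = T0 / G0"
    have sc2: "(real (Suc j) + r + 1) * E \<theta> \<beta> (Suc (Suc j)) 0 * Q =
     ((2 * real (Suc j) + \<theta> + r + 1) * E \<theta> \<beta> (Suc j) 0 - (real (Suc j) + \<theta>) * E \<theta> \<beta> j 0
     - r * (E \<theta> \<beta> (Suc j) 0 - E \<theta> \<beta> (Suc (Suc j)) 0)) * Q" using sc by simp
    show ?thesis unfolding times_divide_eq_right[symmetric] h Q_def[symmetric]
      using sc2 by (simp add: algebra_simps)
  qed
  have "(real (Suc j) + r + 1) * J (Suc (Suc j))
    = (2 * real (Suc j) + \<theta> + r + 1 - \<beta> * x) * J (Suc j) - (real (Suc j) + \<theta>) * J j
      - T0 / Gamma r * (E \<theta> \<beta> (Suc j) 0 - E \<theta> \<beta> (Suc (Suc j)) 0)"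
  proof -
    have e: "(2 * real (Suc j) + \<theta> + r + 1 - \<beta> * x) * J (Suc j) = (2 * real (Suc j) + \<theta> + r + 1) * J (Suc j) - \<beta> * U"
      using xJ by (simp add: algebra_simps)
    show ?thesis
      by (rule comb[OF Jsplit[of "Suc (Suc j)"] Jsplit[of "Suc j"] Jsplit[of j] xJ Srec Crec]) simp_all
  qed
  then show ?thesis unfolding J_def T0_def r_def .
qed

lemma lag0: "laguerre \<theta> \<beta> i 0 = E \<theta> \<beta> i 0"
  by (simp add: laguerre_sum[of i i] sum.atMost_shift)

theorem mainTheorem1:
  fixes \<theta> \<beta> \<rho>min \<rho>max :: real and n :: nat and \<rho> :: "real \<Rightarrow> real"
  assumes "\<theta> > -1" and "\<beta> > 0" and "n \<ge> 1"
    and "\<And>x. x > 0 \<Longrightarrow> real n - 1 < \<rho>min \<and> \<rho>min < \<rho> x \<and> \<rho> x < \<rho>max \<and> \<rho>max < real n"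
  shows "\<forall>x>0.
     laguerre_frac \<rho> \<theta> \<beta> 0 x = x powr (\<rho> x) / Gamma (\<rho> x + 1)
   \<and> laguerre_frac \<rho> \<theta> \<beta> 1 x =
       (\<theta> + 1) * x powr (\<rho> x) / Gamma (\<rho> x + 1) - \<beta> * x powr (\<rho> x + 1) / Gamma (\<rho> x + 2)
   \<and> (\<forall>i\<ge>1. laguerre_frac \<rho> \<theta> \<beta> (i + 1) x =
       (1 / (real i + \<rho> x + 1)) *
         ((2 * real i + \<theta> + \<rho> x + 1 - \<beta> * x) * laguerre_frac \<rho> \<theta> \<beta> i x
          - (real i + \<theta>) * laguerre_frac \<rho> \<theta> \<beta> (i - 1) x
          - x powr (\<rho> x) / Gamma (\<rho> x) * (laguerre \<theta> \<beta> i 0 - laguerre \<theta> \<beta> (i + 1) 0)))"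
proof (intro allI impI)
  fix x :: real assume x: "x > 0"
  have n1: "real n \<ge> 1" using assms(3) by simp
  have r0: "\<rho> x > 0" using assms(4)[OF x] n1 by linarith
  have P0: "laguerre_frac \<rho> \<theta> \<beta> 0 x = x powr (\<rho> x) / Gamma (\<rho> x + 1)"
    by (subst frac_sum[of x \<rho> 0 0, OF x r0]) (simp_all add: E_def)
  have P1: "laguerre_frac \<rho> \<theta> \<beta> 1 x =
       (\<theta> + 1) * x powr (\<rho> x) / Gamma (\<rho> x + 1) - \<beta> * x powr (\<rho> x + 1) / Gamma (\<rho> x + 2)"
    by (subst frac_sum[of x \<rho> 1 1, OF x r0]) (simp_all add: E_def add_ac diff_divide_distrib)
  have P2: "laguerre_frac \<rho> \<theta> \<beta> (i + 1) x =
       (1 / (real i + \<rho> x + 1)) *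
         ((2 * real i + \<theta> + \<rho> x + 1 - \<beta> * x) * laguerre_frac \<rho> \<theta> \<beta> i x
          - (real i + \<theta>) * laguerre_frac \<rho> \<theta> \<beta> (i - 1) x
          - x powr (\<rho> x) / Gamma (\<rho> x) * (laguerre \<theta> \<beta> i 0 - laguerre \<theta> \<beta> (i + 1) 0))"
    if i1: "i \<ge> 1" for i
  proof -
    obtain j where j: "i = Suc j" using i1 by (cases i) auto
    have c: "real (Suc j) + \<rho> x + 1 > 0" using r0 by simp
    have M: "(real (Suc j) + \<rho> x + 1) * laguerre_frac \<rho> \<theta> \<beta> (Suc (Suc j)) x
    = (2 * real (Suc j) + \<theta> + \<rho> x + 1 - \<beta> * x) * laguerre_frac \<rho> \<theta> \<beta> (Suc j) x
      - (real (Suc j) + \<theta>) * laguerre_frac \<rho> \<theta> \<beta> j x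
      - x powr (\<rho> x) / Gamma (\<rho> x) * (E \<theta> \<beta> (Suc j) 0 - E \<theta> \<beta> (Suc (Suc j)) 0)"
      by (rule main_rec[of x \<rho>, OF x r0])
    have "laguerre_frac \<rho> \<theta> \<beta> (Suc (Suc j)) x = (1 / (real (Suc j) + \<rho> x + 1)) *
      ((2 * real (Suc j) + \<theta> + \<rho> x + 1 - \<beta> * x) * laguerre_frac \<rho> \<theta> \<beta> (Suc j) x
      - (real (Suc j) + \<theta>) * laguerre_frac \<rho> \<theta> \<beta> j x
      - x powr (\<rho> x) / Gamma (\<rho> x) * (E \<theta> \<beta> (Suc j) 0 - E \<theta> \<beta> (Suc (Suc j)) 0))"
      unfolding M[symmetric] using c by simp
    then show ?thesis unfolding j lag0 by simp
  qed
  show "laguerre_frac \<rho> \<theta> \<beta> 0 x = x powr (\<rho> x) / Gamma (\<rho> x + 1)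
   \<and> laguerre_frac \<rho> \<theta> \<beta> 1 x =
       (\<theta> + 1) * x powr (\<rho> x) / Gamma (\<rho> x + 1) - \<beta> * x powr (\<rho> x + 1) / Gamma (\<rho> x + 2)
   \<and> (\<forall>i\<ge>1. laguerre_frac \<rho> \<theta> \<beta> (i + 1) x =
       (1 / (real i + \<rho> x + 1)) *
         ((2 * real i + \<theta> + \<rho> x + 1 - \<beta> * x) * laguerre_frac \<rho> \<theta> \<beta> i x
          - (real i + \<theta>) * laguerre_frac \<rho> \<theta> \<beta> (i - 1) x
          - x powr (\<rho> x) / Gamma (\<rho> x) * (laguerre \<theta> \<beta> i 0 - laguerre \<theta> \<beta> (i + 1) 0)))"
    using P0 P1 P2 by blast
qed

end
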